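(* Let $n_C,n_D\in\mathbb{N}$ and $\mathcal{S}=\{(s_C,s_D)\in\mathbb{N}_0^2: s_C\le n_C,\ s_D\le n_D\}$, enumerated as $\mathbf{s}_1,\dots,\mathbf{s}_{|\mathcal{S}|}$ with index map $\phi(\mathbf{s}_i)=i$. For $\boldsymbol\theta=(\theta_C,\theta_D)\in[0,1]^2$ let $\mathbb{P}_{\boldsymbol\theta}(\mathbf{S}=\mathbf{s})=\binom{n_C}{s_C}\theta_C^{s_C}(1-\theta_C)^{n_C-s_C}\binom{n_D}{s_D}\theta_D^{s_D}(1-\theta_D)^{n_D-s_D}$. Let $g_0$ be an increasing, differentiable function with $g_0(0)\in[0,1]$ and $g_0^{-1}(1)$ defined, and for $K\in\mathbb{N}$ let $0=\theta_1<\theta_2<\dots<\theta_K=g_0^{-1}(1)$. Let $d:\mathcal{S}\to\{0,1\}$ be a decision function, identified with the vector $\mathbf{d}\in\{0,1\}^{|\mathcal{S}|}$, $d_i=d(\mathbf{s}_i)$, satisfying Barnard's convexity condition: $d(\mathbf{s}-(1,0))\ge d(\mathbf{s})$ and $d(\mathbf{s}+(0,1))\ge d(\mathbf{s})$ for all $\mathbf{s}\in\mathcal{S}$ (whenever the shifted vector lies in $\mathcal{S}$). For $\theta\in[0,g_0^{-1}(1)]$ let $r_d(\theta)=\mathbb{P}_{(\theta,g_0(\theta))}(d(\mathbf{S})=1)$, and let $\mathbf{p}_{j,0}\in\mathbb{R}^{|\mathcal{S}|}$ have entries $p_{i,j,0}=\mathbb{P}_{(\theta_j,g_0(\theta_j))}(\mathbf{S}=\mathbf{s}_i)$,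 so that $r_d(\theta_j)=\mathbf{p}_{j,0}^\top\mathbf{d}$. Let $\mathbf{A}_C,\mathbf{A}_D$ be the $|\mathcal{S}|\times|\mathcal{S}|$ matrices whose $i$-th rows are $\mathbf{e}_i-\mathbf{e}_{\phi(\mathbf{s}_i+(1,0))}$ and $\mathbf{e}_i-\mathbf{e}_{\phi(\mathbf{s}_i-(0,1))}$ respectively, where $\mathbf{e}_i$ is the $i$-th standard unit vector and $\mathbf{e}_{\phi(\mathbf{s})}:=\mathbf{0}$ if $\mathbf{s}\notin\mathcal{S}$. For $j\in\{1,\dots,K-1\}$ define vectors $\mathbf{m}_{j,D},\mathbf{m}_{j,C}$ with entries (writing $\mathbf{s}_i=(s_C,s_D)$) $$m_{i,j,D}=n_D(\theta_{j+1}-\theta_j)\binom{n_C}{s_C}\binom{n_D-1}{s_D-1}\max_{\theta\in[\theta_j,\theta_{j+1}]} g_0'(\theta)\,\theta^{s_C}g_0(\theta)^{s_D-1}(1-\theta)^{n_C-s_C}(1-g_0(\theta))^{n_D-s_D},$$ $$m_{i,j,C}=n_C(\theta_{j+1}-\theta_j)\binom{n_C-1}{s_C}\binom{n_D}{s_D}\min_{\theta\in[\theta_j,\theta_{j+1}]} \theta^{s_C}g_0(\theta)^{s_D}(1-\theta)^{n_C-s_C-1}(1-g_0(\theta))^{n_D-s_D}.$$ Then for every $j\in\{1,\dots,K-1\}$ and every $\theta\in(\theta_j,\theta_{j+1})$, $$r_d(\theta)\le \mathbf{p}_{j,0}^\top\mathbf{d}+\max\bigl(0,\ (\mathbf{m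}_{j,D}^\top\mathbf{A}_D-\mathbf{m}_{j,C}^\top\mathbf{A}_C)\mathbf{d}\bigr).$$
   Context: Conventions: $\binom{a}{b}=0$ if $b<0$ or $b>a$, and any entry whose binomial coefficient factor is $0$ is taken to be $0$ (regardless of negative exponents in the accompanying function). The setting is the one-sided two-sample binomial test of $H_0:\theta_D\le g_0(\theta_C)$, with $r_d$ the rejection rate of $d$ along the boundary $\{(\theta,g_0(\theta))\}$ of the null parameter set. *)

theory Defs
  imports "HOL-Analysis.Analysis"
begin

definition Sset :: "nat \<Rightarrow> nat \<Rightarrow> (nat \<times> nat) set" where
  "Sset nC nD = {(a, b). a \<le> nC \<and> b \<le> nD}"

definition prob :: "nat \<Rightarrow> nat \<Rightarrow> real \<Rightarrow> real \<Rightarrow> nat \<times> nat \<Rightarrow> real" where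
  "prob nC nD tC tD s =
     real (nC choose fst s) * tC ^ fst s * (1 - tC) ^ (nC - fst s)
   * real (nD choose snd s) * tD ^ snd s * (1 - tD) ^ (nD - snd s)"

definition rej :: "nat \<Rightarrow> nat \<Rightarrow> (real \<Rightarrow> real) \<Rightarrow> (nat \<times> nat \<Rightarrow> real) \<Rightarrow> real \<Rightarrow> real" where
  "rej nC nD g0 d t = (\<Sum>s\<in>{s\<in>Sset nC nD. d s = 1}. prob nC nD t (g0 t) s)"

text \<open>Vectors indexed by S; inner product and row-vector * matrix * column-vector.\<close>
definition dotS :: "nat \<Rightarrow> nat \<Rightarrow> (nat \<times> nat \<Rightarrow> real) \<Rightarrow> (nat \<times> nat \<Rightarrow> real) \<Rightarrow> real" where
  "dotS nC nD u v = (\<Sum>s\<in>Sset nC nD. u s * v s)"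

definition vmv :: "nat \<Rightarrow> nat \<Rightarrow> (nat \<times> nat \<Rightarrow> real) \<Rightarrow> (nat \<times> nat \<Rightarrow> nat \<times> nat \<Rightarrow> real)
                   \<Rightarrow> (nat \<times> nat \<Rightarrow> real) \<Rightarrow> real" where
  "vmv nC nD m A v = (\<Sum>s\<in>Sset nC nD. \<Sum>s'\<in>Sset nC nD. m s * A s s' * v s')"

definition AC :: "nat \<Rightarrow> nat \<Rightarrow> nat \<times> nat \<Rightarrow> nat \<times> nat \<Rightarrow> real" where
  "AC nC nD s s' = (if s' = s then 1 else 0)
     - (if (fst s + 1, snd s) \<in> Sset nC nD \<and> s' = (fst s + 1, snd s) then 1 else 0)"

definition AD :: "nat \<Rightarrow> nat \<Rightarrow> nat \<times> nat \<Rightarrow> nat \<times> nat \<Rightarrow> real" where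
  "AD nC nD s s' = (if s' = s then 1 else 0)
     - (if 1 \<le> snd s \<and> s' = (fst s, snd s - 1) then 1 else 0)"

text \<open>m_{j,D}; the entry is 0 when sD = 0 since binom(nD-1, -1) = 0. The max is
  rendered as a supremum (it equals the max whenever the max exists).\<close>
definition mD :: "nat \<Rightarrow> nat \<Rightarrow> (real \<Rightarrow> real) \<Rightarrow> (real \<Rightarrow> real) \<Rightarrow> (nat \<Rightarrow> real) \<Rightarrow> nat
                  \<Rightarrow> nat \<times> nat \<Rightarrow> real" where
  "mD nC nD g0 g0' th j s =
    (if snd s = 0 then 0 else
      real nD * (th (j + 1) - th j) * real (nC choose fst s) * real ((nD - 1) choose (snd s - 1))
      * (SUP t\<in>{th j..th (j + 1)}. g0' t * t ^ fst s * g0 t ^ (snd s - 1)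
                                   * (1 - t) ^ (nC - fst s) * (1 - g0 t) ^ (nD - snd s)))"

text \<open>m_{j,C}; the entry is 0 when sC = nC since binom(nC-1, nC) = 0 (nat choose).\<close>
definition mC :: "nat \<Rightarrow> nat \<Rightarrow> (real \<Rightarrow> real) \<Rightarrow> (nat \<Rightarrow> real) \<Rightarrow> nat
                  \<Rightarrow> nat \<times> nat \<Rightarrow> real" where
  "mC nC nD g0 th j s =
    (if nC \<le> fst s then 0 else
      real nC * (th (j + 1) - th j) * real ((nC - 1) choose fst s) * real (nD choose snd s)
      * (INF t\<in>{th j..th (j + 1)}. t ^ fst s * g0 t ^ snd s
                                   * (1 - t) ^ (nC - fst s - 1) * (1 - g0 t) ^ (nD - snd s)))"

end

theory Submission
  imports Defs
begin

definition bp :: "nat \<Rightarrow> nat \<Rightarrow> real \<Rightarrow> real" where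
  "bp n a x = real (n choose a) * x ^ a * (1 - x) ^ (n - a)"

definition dbp :: "nat \<Rightarrow> nat \<Rightarrow> real \<Rightarrow> real" where
  "dbp n a x = real (n choose a) * (real a * x ^ (a - 1) * (1 - x) ^ (n - a)
                 - real (n - a) * x ^ a * (1 - x) ^ (n - a - 1))"

lemma bp_deriv: "(bp n a has_real_derivative dbp n a x) (at x within S)"
  unfolding bp_def dbp_def
  by (auto intro!: derivative_eq_intros simp: algebra_simps)

lemma core1:
  "(\<Sum>a\<le>n. h a * dbp n a x)
   = (\<Sum>a<n. real n * real ((n - 1) choose a) * x ^ a * (1 - x) ^ (n - 1 - a) * (h (a + 1) - h a))"
proof (cases n)
  case 0
  then show ?thesis by (simp add: dbp_def)
next
  case (Suc m)
  have e1: "(\<Sum>a\<le>n. h a * (real (n choose a) * real a * x ^ (a - 1) * (1 - x) ^ (n - a)))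
      = (\<Sum>a<n. real n * real ((n - 1) choose a) * x ^ a * (1 - x) ^ (n - 1 - a) * h (a + 1))"
  proof -
    have "(\<Sum>a\<le>n. h a * (real (n choose a) * real a * x ^ (a - 1) * (1 - x) ^ (n - a)))
        = (\<Sum>a\<le>m. h (Suc a) * (real (Suc m choose Suc a) * real (Suc a) * x ^ a * (1 - x) ^ (m - a)))"
      unfolding Suc by (subst sum.atMost_Suc_shift) simp
    also have "\<dots> = (\<Sum>a\<le>m. real n * real ((n - 1) choose a) * x ^ a * (1 - x) ^ (n - 1 - a) * h (a + 1))"
    proof (rule sum.cong[OF refl])
      fix a
      have "real (Suc m choose Suc a) * real (Suc a) = real (Suc m) * real (m choose a)"
        using Suc_times_binomial[of a m] by (metis mult.commute of_nat_mult)
      then show "h (Suc a) * (real (Suc m choose Suc a) * real (Suc a) * x ^ a * (1 - x) ^ (m - a))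
          = real n * real ((n - 1) choose a) * x ^ a * (1 - x) ^ (n - 1 - a) * h (a + 1)"
        unfolding Suc by (simp add: algebra_simps)
    qed
    also have "\<dots> = (\<Sum>a<n. real n * real ((n - 1) choose a) * x ^ a * (1 - x) ^ (n - 1 - a) * h (a + 1))"
      unfolding Suc using lessThan_Suc_atMost by simp
    finally show ?thesis .
  qed
  have e2: "(\<Sum>a\<le>n. h a * (real (n choose a) * real (n - a) * x ^ a * (1 - x) ^ (n - a - 1)))
      = (\<Sum>a<n. real n * real ((n - 1) choose a) * x ^ a * (1 - x) ^ (n - 1 - a) * h a)"
  proof -
    have "(\<Sum>a\<le>n. h a * (real (n choose a) * real (n - a) * x ^ a * (1 - x) ^ (n - a - 1)))
        = (\<Sum>a<n. h a * (real (n choose a) * real (n - a) * x ^ a * (1 - x) ^ (n - a - 1)))"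
      by (simp add: lessThan_Suc_atMost[symmetric] Suc)
    also have "\<dots> = (\<Sum>a<n. real n * real ((n - 1) choose a) * x ^ a * (1 - x) ^ (n - 1 - a) * h a)"
    proof (rule sum.cong[OF refl])
      fix a
      have "real (n choose a) * real (n - a) = real n * real ((n - 1) choose a)"
        using binomial_absorb_comp[of n a] by (metis mult.commute of_nat_mult)
      then show "h a * (real (n choose a) * real (n - a) * x ^ a * (1 - x) ^ (n - a - 1))
          = real n * real ((n - 1) choose a) * x ^ a * (1 - x) ^ (n - 1 - a) * h a"
        by (simp add: algebra_simps)
    qed
    finally show ?thesis .
  qed
  have "(\<Sum>a\<le>n. h a * dbp n a x)
      = (\<Sum>a\<le>n. h a * (real (n choose a) * real a * x ^ (a - 1) * (1 - x) ^ (n - a)))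
      - (\<Sum>a\<le>n. h a * (real (n choose a) * real (n - a) * x ^ a * (1 - x) ^ (n - a - 1)))"
    unfolding dbp_def sum_subtractf[symmetric] by (rule sum.cong) (auto simp: algebra_simps)
  also have "\<dots> = (\<Sum>a<n. real n * real ((n - 1) choose a) * x ^ a * (1 - x) ^ (n - 1 - a) * (h (a + 1) - h a))"
    unfolding e1 e2 sum_subtractf[symmetric] by (rule sum.cong) (auto simp: algebra_simps)
  finally show ?thesis .
qed

lemma Sset_sum: "(\<Sum>s\<in>Sset nC nD. f s) = (\<Sum>a\<le>nC. \<Sum>b\<le>nD. f (a, b))"
proof -
  have "Sset nC nD = {..nC} \<times> {..nD}" by (auto simp: Sset_def)
  then show ?thesis by (simp add: sum.cartesian_product)
qed

lemma AC_row:
  assumes "a \<le> nC" "b \<le> nD"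
  shows "(\<Sum>s'\<in>Sset nC nD. AC nC nD (a, b) s' * v s') = v (a, b) - (if a + 1 \<le> nC then v (a + 1, b) else 0)"
proof -
  have "(\<Sum>s'\<in>Sset nC nD. AC nC nD (a, b) s' * v s')
     = (\<Sum>s'\<in>Sset nC nD. (if s' = (a, b) then v s' else 0))
     - (\<Sum>s'\<in>Sset nC nD. (if (a + 1, b) \<in> Sset nC nD \<and> s' = (a + 1, b) then v s' else 0))"
    unfolding sum_subtractf[symmetric] AC_def by (rule sum.cong) (auto simp: algebra_simps)
  also have "\<dots> = v (a, b) - (if a + 1 \<le> nC then v (a + 1, b) else 0)"
    using assms by (simp add: sum.delta' Sset_def if_distrib cong: if_cong)
  finally show ?thesis .
qed

lemma AD_row:
  assumes "a \<le> nC" "b \<le> nD"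
  shows "(\<Sum>s'\<in>Sset nC nD. AD nC nD (a, b) s' * v s') = v (a, b) - (if 1 \<le> b then v (a, b - 1) else 0)"
proof -
  have "(\<Sum>s'\<in>Sset nC nD. AD nC nD (a, b) s' * v s')
     = (\<Sum>s'\<in>Sset nC nD. (if s' = (a, b) then v s' else 0))
     - (\<Sum>s'\<in>Sset nC nD. (if 1 \<le> b \<and> s' = (a, b - 1) then v s' else 0))"
    unfolding sum_subtractf[symmetric] AD_def by (rule sum.cong) (auto simp: algebra_simps)
  also have "\<dots> = v (a, b) - (if 1 \<le> b then v (a, b - 1) else 0)"
    using assms by (simp add: sum.delta' Sset_def if_distrib cong: if_cong) auto
  finally show ?thesis .
qed


lemma bp_chain:
  assumes "(f has_real_derivative f') (at x within S)"
  shows "((\<lambda>x. bp n a (f x)) has_real_derivative dbp n a (f x) * f') (at x within S)"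
  using DERIV_chain2[OF bp_deriv[of n a "f x" UNIV] assms] by simp

lemma vmv_AC: "vmv nC nD m (AC nC nD) v
  = (\<Sum>a\<le>nC. \<Sum>b\<le>nD. m (a, b) * (v (a, b) - (if a + 1 \<le> nC then v (a + 1, b) else 0)))"
proof -
  have "vmv nC nD m (AC nC nD) v = (\<Sum>s\<in>Sset nC nD. m s * (\<Sum>s'\<in>Sset nC nD. AC nC nD s s' * v s'))"
    unfolding vmv_def by (simp add: sum_distrib_left mult.assoc)
  also have "\<dots> = (\<Sum>a\<le>nC. \<Sum>b\<le>nD. m (a, b) * (v (a, b) - (if a + 1 \<le> nC then v (a + 1, b) else 0)))"
    by (subst Sset_sum) (auto intro!: sum.cong simp: AC_row)
  finally show ?thesis .
qed

lemma vmv_AD: "vmv nC nD m (AD nC nD) v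
  = (\<Sum>a\<le>nC. \<Sum>b\<le>nD. m (a, b) * (v (a, b) - (if 1 \<le> b then v (a, b - 1) else 0)))"
proof -
  have "vmv nC nD m (AD nC nD) v = (\<Sum>s\<in>Sset nC nD. m s * (\<Sum>s'\<in>Sset nC nD. AD nC nD s s' * v s'))"
    unfolding vmv_def by (simp add: sum_distrib_left mult.assoc)
  also have "\<dots> = (\<Sum>a\<le>nC. \<Sum>b\<le>nD. m (a, b) * (v (a, b) - (if 1 \<le> b then v (a, b - 1) else 0)))"
    by (subst Sset_sum) (auto intro!: sum.cong simp: AD_row)
  finally show ?thesis .
qed

lemma prod_bound:
  fixes g B u v w x :: real
  assumes "g \<le> B" "0 \<le> u" "u \<le> 1" "0 \<le> v" "v \<le> 1" "0 \<le> w" "w \<le> 1" "0 \<le> x" "x \<le> 1"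
  shows "g * u * v * w * x \<le> max 0 B"
proof -
  have P0: "0 \<le> u * v * w * x" using assms by simp
  have P1: "u * v * w * x \<le> 1" using assms by (intro mult_le_one) auto
  have "g * u * v * w * x = g * (u * v * w * x)" by (simp add: mult.assoc)
  also have "\<dots> \<le> max 0 B"
  proof (cases "g \<ge> 0")
    case True
    then have "g * (u * v * w * x) \<le> g * 1" using P1 by (intro mult_left_mono) auto
    then show ?thesis using assms by simp
  next
    case False
    then have "g * (u * v * w * x) \<le> 0" using P0 by (simp add: mult_nonpos_nonneg)
    then show ?thesis by simp
  qed
  finally show ?thesis .
qed

lemma final_step:
  fixes c X D :: real
  assumes "0 < D" "c \<le> D" "0 \<le> c" "D * R \<le> X"
  shows "c * R \<le> max 0 X"
proof -
  have "c * R = (c / D) * (D * R)" using assms by simp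
  also have "\<dots> \<le> (c / D) * X" using assms by (intro mult_left_mono) auto
  also have "\<dots> \<le> max 0 X"
  proof (cases "X \<ge> 0")
    case True
    have "c / D \<le> 1" using assms by simp
    then have "(c / D) * X \<le> 1 * X" using True by (intro mult_right_mono) auto
    then show ?thesis by simp
  next
    case False
    have "0 \<le> c / D" using assms by simp
    then have "(c / D) * X \<le> 0" using False mult_nonneg_nonpos[of "c / D" X] by linarith
    then show ?thesis by simp
  qed
  finally show ?thesis .
qed


lemma partC:
  fixes g0 :: "real \<Rightarrow> real" and th :: "nat \<Rightarrow> real" and d :: "nat \<times> nat \<Rightarrow> real"
  assumes z: "z \<in> {th j..th (j + 1)}"
    and rng: "\<And>t. t \<in> {th j..th (j + 1)} \<Longrightarrow> 0 \<le> t \<and> t \<le> 1 \<and> 0 \<le> g0 t \<and> g0 t \<le> 1"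
    and Dpos: "0 \<le> th (j + 1) - th j"
    and barnard_C: "\<And>a b. (a, b) \<in> Sset nC nD \<Longrightarrow> 1 \<le> a \<Longrightarrow> d (a - 1, b) \<ge> d (a, b)"
  shows "(th (j + 1) - th j) * (\<Sum>s\<in>Sset nC nD. d s * (dbp nC (fst s) z * bp nD (snd s) (g0 z)))
         \<le> - vmv nC nD (mC nC nD g0 th j) (AC nC nD) d"
proof -
  define y where "y = g0 z"
  define \<Delta> where "\<Delta> = th (j + 1) - th j"
  define cC where "cC a = real nC * real ((nC - 1) choose a) * z ^ a * (1 - z) ^ (nC - 1 - a)" for a
  have "(\<Sum>s\<in>Sset nC nD. d s * (dbp nC (fst s) z * bp nD (snd s) y))
      = (\<Sum>b\<le>nD. bp nD b y * (\<Sum>a\<le>nC. d (a, b) * dbp nC a z))"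
    by (simp add: Sset_sum sum.swap[of _ "{..nC}"] sum_distrib_left mult_ac)
  also have "\<dots> = (\<Sum>b\<le>nD. bp nD b y * (\<Sum>a<nC. cC a * (d (a + 1, b) - d (a, b))))"
    by (rule sum.cong[OF refl]) (simp add: core1 cC_def)
  also have "\<dots> = (\<Sum>a<nC. \<Sum>b\<le>nD. bp nD b y * (cC a * (d (a + 1, b) - d (a, b))))"
    by (simp add: sum_distrib_left sum.swap[of _ "{..nD}"])
  finally have P1: "(\<Sum>s\<in>Sset nC nD. d s * (dbp nC (fst s) z * bp nD (snd s) y))
      = (\<Sum>a<nC. \<Sum>b\<le>nD. bp nD b y * (cC a * (d (a + 1, b) - d (a, b))))" .
  have V: "- vmv nC nD (mC nC nD g0 th j) (AC nC nD) d
      = (\<Sum>a<nC. \<Sum>b\<le>nD. - (mC nC nD g0 th j (a, b) * (d (a, b) - d (a + 1, b))))"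
  proof -
    have "vmv nC nD (mC nC nD g0 th j) (AC nC nD) d
        = (\<Sum>a<Suc nC. \<Sum>b\<le>nD. mC nC nD g0 th j (a, b) * (d (a, b) - (if a + 1 \<le> nC then d (a + 1, b) else 0)))"
      by (simp add: vmv_AC lessThan_Suc_atMost)
    also have "\<dots> = (\<Sum>a<nC. \<Sum>b\<le>nD. mC nC nD g0 th j (a, b) * (d (a, b) - d (a + 1, b)))"
      by (simp add: mC_def)
    finally show ?thesis by (simp add: sum_negf)
  qed
  have "\<Delta> * (\<Sum>a<nC. \<Sum>b\<le>nD. bp nD b y * (cC a * (d (a + 1, b) - d (a, b))))
      = (\<Sum>a<nC. \<Sum>b\<le>nD. \<Delta> * (bp nD b y * (cC a * (d (a + 1, b) - d (a, b)))))"
    by (simp add: sum_distrib_left)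
  also have "\<dots> \<le> (\<Sum>a<nC. \<Sum>b\<le>nD. - (mC nC nD g0 th j (a, b) * (d (a, b) - d (a + 1, b))))"
  proof (intro sum_mono)
    fix a b assume a: "a \<in> {..<nC}" and b: "b \<in> {..nD}"
    define Dd where "Dd = d (a, b) - d (a + 1, b)"
    have Dd: "0 \<le> Dd" using barnard_C[of "a + 1" b] a b by (simp add: Sset_def Dd_def)
    define f where "f t = t ^ a * g0 t ^ b * (1 - t) ^ (nC - a - 1) * (1 - g0 t) ^ (nD - b)" for t
    have "(INF t\<in>{th j..th (j + 1)}. f t) \<le> f z"
    proof (rule cINF_lower[OF _ z])
      show "bdd_below (f ` {th j..th (j + 1)})"
        by (rule bdd_belowI2[of _ 0]) (use rng in \<open>auto simp: f_def\<close>)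
    qed
    define K0 where "K0 = real nC * \<Delta> * real ((nC - 1) choose a) * real (nD choose b)"
    have K0: "0 \<le> K0" using Dpos by (simp add: K0_def \<Delta>_def)
    have "K0 * (INF t\<in>{th j..th (j + 1)}. f t) * Dd \<le> K0 * f z * Dd"
      by (intro mult_right_mono mult_left_mono) fact+
    moreover have "mC nC nD g0 th j (a, b) = K0 * (INF t\<in>{th j..th (j + 1)}. f t)"
      using a by (simp add: mC_def K0_def f_def \<Delta>_def)
    moreover have "\<Delta> * (bp nD b y * (cC a * (d (a + 1, b) - d (a, b)))) = - (K0 * f z * Dd)"
      by (simp add: bp_def cC_def K0_def f_def Dd_def y_def algebra_simps)
    ultimately show "\<Delta> * (bp nD b y * (cC a * (d (a + 1, b) - d (a, b))))
        \<le> - (mC nC nD g0 th j (a, b) * (d (a, b) - d (a + 1, b)))"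
      by (simp add: Dd_def)
  qed
  finally show ?thesis using P1 V by (simp add: \<Delta>_def y_def)
qed


lemma partD:
  fixes g0 g0' :: "real \<Rightarrow> real" and th :: "nat \<Rightarrow> real" and d :: "nat \<times> nat \<Rightarrow> real"
  assumes z: "z \<in> {th j..th (j + 1)}"
    and rng: "\<And>t. t \<in> {th j..th (j + 1)} \<Longrightarrow> 0 \<le> t \<and> t \<le> 1 \<and> 0 \<le> g0 t \<and> g0 t \<le> 1"
    and gB: "\<And>t. t \<in> {th j..th (j + 1)} \<Longrightarrow> g0' t \<le> B"
    and Dpos: "0 \<le> th (j + 1) - th j"
    and nD: "1 \<le> nD"
    and barnard_D: "\<And>a b. (a, b) \<in> Sset nC nD \<Longrightarrow> b + 1 \<le> nD \<Longrightarrow> d (a, b + 1) \<ge> d (a, b)"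
  shows "(th (j + 1) - th j) * (\<Sum>s\<in>Sset nC nD. d s * (bp nC (fst s) z * (dbp nD (snd s) (g0 z) * g0' z)))
         \<le> vmv nC nD (mD nC nD g0 g0' th j) (AD nC nD) d"
proof -
  define y where "y = g0 z"
  define \<Delta> where "\<Delta> = th (j + 1) - th j"
  define cD where "cD b = real nD * real ((nD - 1) choose b) * y ^ b * (1 - y) ^ (nD - 1 - b)" for b
  obtain m where m: "nD = Suc m" using nD by (cases nD) auto
  have "(\<Sum>s\<in>Sset nC nD. d s * (bp nC (fst s) z * (dbp nD (snd s) y * g0' z)))
      = (\<Sum>a\<le>nC. bp nC a z * g0' z * (\<Sum>b\<le>nD. d (a, b) * dbp nD b y))"
    by (simp add: Sset_sum sum_distrib_left mult_ac)
  also have "\<dots> = (\<Sum>a\<le>nC. bp nC a z * g0' z * (\<Sum>b<nD. cD b * (d (a, b + 1) - d (a, b))))"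
    by (rule sum.cong[OF refl]) (simp add: core1 cD_def)
  also have "\<dots> = (\<Sum>a\<le>nC. \<Sum>b<nD. bp nC a z * g0' z * (cD b * (d (a, b + 1) - d (a, b))))"
    by (simp add: sum_distrib_left)
  finally have P2: "(\<Sum>s\<in>Sset nC nD. d s * (bp nC (fst s) z * (dbp nD (snd s) y * g0' z)))
      = (\<Sum>a\<le>nC. \<Sum>b<nD. bp nC a z * g0' z * (cD b * (d (a, b + 1) - d (a, b))))" .
  have V: "vmv nC nD (mD nC nD g0 g0' th j) (AD nC nD) d
      = (\<Sum>a\<le>nC. \<Sum>b<nD. mD nC nD g0 g0' th j (a, b + 1) * (d (a, b + 1) - d (a, b)))"
    unfolding vmv_AD
  proof (rule sum.cong[OF refl])
    fix a
    show "(\<Sum>b\<le>nD. mD nC nD g0 g0' th j (a, b) * (d (a, b) - (if 1 \<le> b then d (a, b - 1) else 0)))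
       = (\<Sum>b<nD. mD nC nD g0 g0' th j (a, b + 1) * (d (a, b + 1) - d (a, b)))"
      unfolding m by (subst sum.atMost_Suc_shift) (simp add: mD_def lessThan_Suc_atMost)
  qed
  have "\<Delta> * (\<Sum>a\<le>nC. \<Sum>b<nD. bp nC a z * g0' z * (cD b * (d (a, b + 1) - d (a, b))))
      = (\<Sum>a\<le>nC. \<Sum>b<nD. \<Delta> * (bp nC a z * g0' z * (cD b * (d (a, b + 1) - d (a, b)))))"
    by (simp add: sum_distrib_left)
  also have "\<dots> \<le> (\<Sum>a\<le>nC. \<Sum>b<nD. mD nC nD g0 g0' th j (a, b + 1) * (d (a, b + 1) - d (a, b)))"
  proof (intro sum_mono)
    fix a b assume a: "a \<in> {..nC}" and b: "b \<in> {..<nD}"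
    define Dd where "Dd = d (a, b + 1) - d (a, b)"
    have Dd: "0 \<le> Dd" using barnard_D[of a b] a b by (simp add: Sset_def Dd_def)
    define f where "f t = g0' t * t ^ a * g0 t ^ b * (1 - t) ^ (nC - a) * (1 - g0 t) ^ (nD - Suc b)" for t
    have "f z \<le> (SUP t\<in>{th j..th (j + 1)}. f t)"
    proof (rule cSUP_upper[OF z])
      show "bdd_above (f ` {th j..th (j + 1)})"
      proof (rule bdd_aboveI2[where M="max 0 B"])
        fix t assume t: "t \<in> {th j..th (j + 1)}"
        show "f t \<le> max 0 B" unfolding f_def
          using rng[OF t] gB[OF t] by (intro prod_bound) (auto intro: power_le_one)
      qed
    qed
    define K0 where "K0 = real nD * \<Delta> * real (nC choose a) * real ((nD - 1) choose b)"
    have K0: "0 \<le> K0" using Dpos by (simp add: K0_def \<Delta>_def)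
    have h2: "mD nC nD g0 g0' th j (a, b + 1) = K0 * (SUP t\<in>{th j..th (j + 1)}. f t)"
      by (simp add: mD_def K0_def f_def \<Delta>_def)
    have "\<Delta> * (bp nC a z * g0' z * (cD b * (d (a, b + 1) - d (a, b)))) = K0 * f z * Dd"
      by (simp add: bp_def cD_def K0_def f_def Dd_def y_def algebra_simps)
    also have "\<dots> \<le> K0 * (SUP t\<in>{th j..th (j + 1)}. f t) * Dd"
      by (intro mult_right_mono mult_left_mono) fact+
    also have "\<dots> = mD nC nD g0 g0' th j (a, b + 1) * (d (a, b + 1) - d (a, b))"
      by (simp only: h2 Dd_def)
    finally show "\<Delta> * (bp nC a z * g0' z * (cD b * (d (a, b + 1) - d (a, b))))
        \<le> mD nC nD g0 g0' th j (a, b + 1) * (d (a, b + 1) - d (a, b))" .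
  qed
  finally show ?thesis using P2 V by (simp add: \<Delta>_def y_def)
qed

theorem theorem2:
  fixes nC nD K :: nat and g0 g0' :: "real \<Rightarrow> real" and tmax :: real
    and th :: "nat \<Rightarrow> real" and d :: "nat \<times> nat \<Rightarrow> real"
  assumes nC: "1 \<le> nC" and nD: "1 \<le> nD"
    and tmax: "0 \<le> tmax" "tmax \<le> 1"
    and g0_mono: "strict_mono_on {0..tmax} g0"
    and g0_deriv: "\<And>x. x \<in> {0..tmax} \<Longrightarrow> (g0 has_real_derivative g0' x) (at x within {0..tmax})"
    and g0_deriv_bdd: "bdd_above (g0' ` {0..tmax})"
    and g0_0: "0 \<le> g0 0" "g0 0 \<le> 1"
    and g0_tmax: "g0 tmax = 1"
    and K: "1 \<le> K"
    and th_1: "th 1 = 0" and th_K: "th K = tmax"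
    and th_incr: "\<And>j. 1 \<le> j \<Longrightarrow> j < K \<Longrightarrow> th j < th (j + 1)"
    and d_01: "\<And>s. s \<in> Sset nC nD \<Longrightarrow> d s = 0 \<or> d s = 1"
    and barnard_C: "\<And>a b. (a, b) \<in> Sset nC nD \<Longrightarrow> 1 \<le> a \<Longrightarrow> d (a - 1, b) \<ge> d (a, b)"
    and barnard_D: "\<And>a b. (a, b) \<in> Sset nC nD \<Longrightarrow> b + 1 \<le> nD \<Longrightarrow> d (a, b + 1) \<ge> d (a, b)"
  shows "\<forall>j\<in>{1..K - 1}. \<forall>t\<in>{th j<..<th (j + 1)}.
           rej nC nD g0 d t
           \<le> dotS nC nD (\<lambda>s. prob nC nD (th j) (g0 (th j)) s) d
             + max 0 (vmv nC nD (mD nC nD g0 g0' th j) (AD nC nD) d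
                      - vmv nC nD (mC nC nD g0 th j) (AC nC nD) d)"
proof (intro ballI)
  fix j t
  assume j: "j \<in> {1..K - 1}" and t: "t \<in> {th j<..<th (j + 1)}"
  have j1: "1 \<le> j" and jK: "j + 1 \<le> K" using j K by auto
  have th_mono: "th i \<le> th (i + k)" if "1 \<le> i" "i + k \<le> K" for i k
    using that
  proof (induction k)
    case 0 then show ?case by simp
  next
    case (Suc k)
    then have "th i \<le> th (i + k)" by simp
    also have "\<dots> < th (i + k + 1)" using Suc.prems by (intro th_incr) auto
    finally show ?case by simp
  qed
  have th0: "0 \<le> th j" using th_mono[of 1 "j - 1"] j1 jK th_1 by simp
  have th1: "th (j + 1) \<le> tmax" using th_mono[of "j + 1" "K - (j + 1)"] jK th_K by simp
  have jlt: "th j < th (j + 1)" using th_incr j1 jK by simp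
  have g0_rng: "0 \<le> g0 x \<and> g0 x \<le> 1" if "x \<in> {0..tmax}" for x
  proof -
    have "g0 0 \<le> g0 x" using strict_mono_on_leD[OF g0_mono, of 0 x] that tmax by auto
    moreover have "g0 x \<le> g0 tmax" using strict_mono_on_leD[OF g0_mono, of x tmax] that tmax by auto
    ultimately show ?thesis using g0_0 g0_tmax by simp
  qed
  have sub: "{th j..th (j + 1)} \<subseteq> {0..tmax}" using th0 th1 by auto
  have rng: "0 \<le> x \<and> x \<le> 1 \<and> 0 \<le> g0 x \<and> g0 x \<le> 1" if "x \<in> {th j..th (j + 1)}" for x
    using that sub g0_rng tmax by force
  have "\<exists>B. \<forall>x\<in>{0..tmax}. g0' x \<le> B" using g0_deriv_bdd by (simp add: bdd_above_def)
  then obtain B where gB: "\<And>x. x \<in> {0..tmax} \<Longrightarrow> g0' x \<le> B" by blast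
  have finS: "finite (Sset nC nD)"
  proof -
    have "Sset nC nD = {..nC} \<times> {..nD}" by (auto simp: Sset_def)
    then show ?thesis by simp
  qed
  define r where "r x = (\<Sum>s\<in>Sset nC nD. d s * (bp nC (fst s) x * bp nD (snd s) (g0 x)))" for x
  define R' where "R' x = (\<Sum>s\<in>Sset nC nD. d s * (bp nC (fst s) x * (dbp nD (snd s) (g0 x) * g0' x)
      + dbp nC (fst s) x * bp nD (snd s) (g0 x)))" for x
  have prob_eq: "prob nC nD x (g0 x) s = bp nC (fst s) x * bp nD (snd s) (g0 x)" for x s
    by (simp add: prob_def bp_def mult_ac)
  have rej_eq: "rej nC nD g0 d x = r x" for x
  proof -
    have "rej nC nD g0 d x = (\<Sum>s\<in>Sset nC nD. if d s = 1 then prob nC nD x (g0 x) s else 0)"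
      unfolding rej_def by (rule sum.inter_filter[OF finS])
    also have "\<dots> = r x" unfolding r_def
      by (rule sum.cong[OF refl]) (use d_01 in \<open>auto simp: prob_eq\<close>)
    finally show ?thesis .
  qed
  have dot_eq: "dotS nC nD (\<lambda>s. prob nC nD (th j) (g0 (th j)) s) d = r (th j)"
    unfolding dotS_def r_def by (rule sum.cong[OF refl]) (simp add: prob_eq mult_ac)
  have derw: "(r has_real_derivative R' x) (at x within {0..tmax})" if "x \<in> {0..tmax}" for x
    unfolding r_def R'_def
    by (intro DERIV_sum DERIV_cmult DERIV_mult' bp_deriv bp_chain g0_deriv[OF that])
  have cont: "continuous_on {th j..t} r"
    using DERIV_continuous_on[OF derw] by (rule continuous_on_subset) (use sub t in auto)
  have der: "(r has_real_derivative R' x) (at x)" if "th j < x" "x < t" for x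
  proof -
    have "0 < x" "x < tmax" using that th0 th1 t by auto
    then show ?thesis using derw[of x] by (simp add: at_within_Icc_at)
  qed
  have tj: "th j < t" using t by simp
  obtain l z where z: "th j < z" "z < t" and dz: "DERIV r z :> l" and eq: "r t - r (th j) = (t - th j) * l"
    using MVT[OF tj cont] der real_differentiable_def by blast
  have lz: "l = R' z" using DERIV_unique[OF dz der[OF z]] .
  have zI: "z \<in> {th j..th (j + 1)}" using z t by auto
  have key: "(th (j + 1) - th j) * R' z
      \<le> vmv nC nD (mD nC nD g0 g0' th j) (AD nC nD) d - vmv nC nD (mC nC nD g0 th j) (AC nC nD) d"
  proof -
    have A: "(th (j + 1) - th j) * (\<Sum>s\<in>Sset nC nD. d s * (dbp nC (fst s) z * bp nD (snd s) (g0 z)))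
         \<le> - vmv nC nD (mC nC nD g0 th j) (AC nC nD) d"
      by (rule partC[OF zI rng]) (use jlt barnard_C in auto)
    have B: "(th (j + 1) - th j) * (\<Sum>s\<in>Sset nC nD. d s * (bp nC (fst s) z * (dbp nD (snd s) (g0 z) * g0' z)))
         \<le> vmv nC nD (mD nC nD g0 g0' th j) (AD nC nD) d"
      by (rule partD[OF zI rng, where B=B]) (use jlt barnard_D nD gB sub in auto)
    show ?thesis using A B unfolding R'_def sum.distrib distrib_left by linarith
  qed
  have "r t - r (th j) \<le> max 0 (vmv nC nD (mD nC nD g0 g0' th j) (AD nC nD) d
                      - vmv nC nD (mC nC nD g0 th j) (AC nC nD) d)"
    unfolding eq lz by (rule final_step[OF _ _ _ key]) (use jlt t in auto)
  then show "rej nC nD g0 d t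
           \<le> dotS nC nD (\<lambda>s. prob nC nD (th j) (g0 (th j)) s) d
             + max 0 (vmv nC nD (mD nC nD g0 g0' th j) (AD nC nD) d
                      - vmv nC nD (mC nC nD g0 th j) (AC nC nD) d)"
    unfolding rej_eq dot_eq by linarith
qed

end
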